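(* Let $\nu = e^{-f}$ on $\mathbb{R}^n$ be $(L,M)$-smooth and let $0 \le t \le \min\{\frac{1}{8L},\frac{1}{M}\}$. For $x\in\mathbb{R}^n$ define $G = G(x) = (I + t\nabla^2 f(x))^{-2}$ and \[ \tilde\mu(x) = -t\,\nabla^2 f(x)\,G\,\nabla f(x) - t\sqrt{G}\,\mathrm{Tr}(\nabla^3 f(x)\,G) - \nabla\cdot G. \] Then for all $x\in\mathbb{R}^n$, \[ \tfrac34 I \preceq G(x) \preceq \tfrac43 I \qquad\text{and}\qquad \|\tilde\mu(x)\| \le \tfrac43 tL\|\nabla f(x)\| + 6\,t\,n^{3/2} M. \]
   Context: $\nu=e^{-f}$ is $(L,M)$-smooth if $f$ is three times differentiable, $\|\nabla^2 f(x)\|_{\mathrm{op}} \le L$ for all $x$, and $\|\nabla^2 f(x) - \nabla^2 f(y)\|_{\mathrm{op}} \le M\|x-y\|$ for all $x,y$. $\sqrt{G}$ is the positive definite square root. $\mathrm{Tr}(\nabla^3 f(x)\,G)\in\mathbb{R}^n$ is the vector whose $i$-th component is $\mathrm{Tr}(\nabla_i\nabla^2 f(x)\,G)$, where $\nabla_i\nabla^2 f(x)$ is the matrix with $(j,k)$ entry $\frac{\partial^3 f(x)}{\partial x_i\partial x_j\partial x_k}$. For a matrix-valued function $G(x)$ (here with $t$ fixed), $\nabla\cdot G(x)\in\mathbb{R}^n$ is the vector whose $i$-th component is $\sum_{j=1}^n \frac{\partial G_{ij}(x)}{\partial x_j}$. *)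

theory Defs
  imports "HOL-Analysis.Analysis"
begin

text \<open>Partial derivative along the i-th coordinate axis.\<close>
definition partial :: "'n::finite \<Rightarrow> (real^'n \<Rightarrow> real) \<Rightarrow> real^'n \<Rightarrow> real" where
  "partial i g x = deriv (\<lambda>s. g (x + s *\<^sub>R axis i 1)) 0"

definition grad :: "(real^'n::finite \<Rightarrow> real) \<Rightarrow> real^'n \<Rightarrow> real^'n" where
  "grad f x = (\<chi> i. partial i f x)"

definition hess :: "(real^'n::finite \<Rightarrow> real) \<Rightarrow> real^'n \<Rightarrow> real^'n^'n" where
  "hess f x = (\<chi> i j. partial i (partial j f) x)"

text \<open>The matrix \<nabla>_i \<nabla>^2 f(x), with (j,k) entry the third partial derivative.\<close>
definition third :: "(real^'n::finite \<Rightarrow> real) \<Rightarrow> real^'n \<Rightarrow> 'n \<Rightarrow> real^'n^'n" where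
  "third f x i = (\<chi> j k. partial i (\<lambda>y. hess f y $ j $ k) x)"

text \<open>Three times (Frechet) differentiable on all of R^n.\<close>
definition thrice_differentiable :: "(real^'n::finite \<Rightarrow> real) \<Rightarrow> bool" where
  "thrice_differentiable f \<longleftrightarrow>
     (\<forall>x. f differentiable (at x)) \<and>
     (\<forall>j x. partial j f differentiable (at x)) \<and>
     (\<forall>j k x. partial j (partial k f) differentiable (at x))"

definition LM_smooth :: "(real^'n::finite \<Rightarrow> real) \<Rightarrow> real \<Rightarrow> real \<Rightarrow> bool" where
  "LM_smooth f L M \<longleftrightarrow> thrice_differentiable f \<and>
     (\<forall>x. onorm (\<lambda>v. hess f x *v v) \<le> L) \<and>
     (\<forall>x y. onorm (\<lambda>v. (hess f x - hess f y) *v v) \<le> M * norm (x - y))"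

text \<open>Loewner order: A \<preceq> B.\<close>
definition loewner_le :: "real^'n::finite^'n \<Rightarrow> real^'n^'n \<Rightarrow> bool" where
  "loewner_le A B \<longleftrightarrow> (\<forall>v. v \<bullet> (A *v v) \<le> v \<bullet> (B *v v))"

definition pos_def :: "real^'n::finite^'n \<Rightarrow> bool" where
  "pos_def S \<longleftrightarrow> transpose S = S \<and> (\<forall>v. v \<noteq> 0 \<longrightarrow> v \<bullet> (S *v v) > 0)"

text \<open>Positive definite square root.\<close>
definition pd_sqrt :: "real^'n::finite^'n \<Rightarrow> real^'n^'n" where
  "pd_sqrt G = (THE S. pos_def S \<and> S ** S = G)"

definition Gmat :: "(real^'n::finite \<Rightarrow> real) \<Rightarrow> real \<Rightarrow> real^'n \<Rightarrow> real^'n^'n" where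
  "Gmat f t x = matrix_inv (mat 1 + t *\<^sub>R hess f x) ** matrix_inv (mat 1 + t *\<^sub>R hess f x)"

text \<open>Divergence of a matrix field: i-th entry is sum_j d/dx_j G_ij.\<close>
definition mdiv :: "(real^'n::finite \<Rightarrow> real^'n^'n) \<Rightarrow> real^'n \<Rightarrow> real^'n" where
  "mdiv G x = (\<chi> i. \<Sum>j\<in>UNIV. partial j (\<lambda>y. G y $ i $ j) x)"

text \<open>Tr(\<nabla>^3 f(x) G) as a vector.\<close>
definition tr3 :: "(real^'n::finite \<Rightarrow> real) \<Rightarrow> real^'n \<Rightarrow> real^'n^'n \<Rightarrow> real^'n" where
  "tr3 f x G = (\<chi> i. trace (third f x i ** G))"

definition mu_tilde :: "(real^'n::finite \<Rightarrow> real) \<Rightarrow> real \<Rightarrow> real^'n \<Rightarrow> real^'n" where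
  "mu_tilde f t x =
     - (t *\<^sub>R (hess f x *v (Gmat f t x *v grad f x)))
     - t *\<^sub>R (pd_sqrt (Gmat f t x) *v tr3 f x (Gmat f t x))
     - mdiv (Gmat f t) x"

end

theory Submission
  imports Defs
begin

lemma mv_bound_from_onorm:
  fixes A :: "real^'n^'m"
  assumes "onorm (\<lambda>v. A *v v) \<le> c" shows "norm (A *v v) \<le> c * norm v"
proof -
  have "norm (A *v v) \<le> onorm (\<lambda>v. A *v v) * norm v" by (rule onorm) simp
  also have "... \<le> c * norm v" using assms by (simp add: mult_right_mono)
  finally show ?thesis .
qed

lemma transpose_add': "transpose (A + B) = transpose A + transpose (B::real^'n^'n)"
  by (simp add: transpose_def vec_eq_iff)

lemma inv_props:
  fixes H :: "real^'n^'n"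
  assumes sym: "transpose H = H" and Hb: "\<And>v. norm (H *v v) \<le> L * norm v"
    and t0: "0 \<le> t" and tL: "8 * L * t \<le> 1"
  shows "invertible (mat 1 + t *\<^sub>R H)"
    "(mat 1 + t *\<^sub>R H) ** matrix_inv (mat 1 + t *\<^sub>R H) = mat 1"
    "matrix_inv (mat 1 + t *\<^sub>R H) ** (mat 1 + t *\<^sub>R H) = mat 1"
    "transpose (matrix_inv (mat 1 + t *\<^sub>R H)) = matrix_inv (mat 1 + t *\<^sub>R H)"
    "\<And>v. norm (matrix_inv (mat 1 + t *\<^sub>R H) *v v) \<le> 8/7 * norm v"
    "\<And>v. norm v \<le> 9/8 * norm (matrix_inv (mat 1 + t *\<^sub>R H) *v v)"
    "pos_def (matrix_inv (mat 1 + t *\<^sub>R H))"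
proof -
  define A where "A = mat 1 + t *\<^sub>R H"
  have Av: "A *v v = v + t *\<^sub>R (H *v v)" for v
    by (simp add: A_def algebra_simps scaleR_matrix_vector_assoc)
  have small: "norm (t *\<^sub>R (H *v v)) \<le> 1/8 * norm v" for v
  proof -
    have "norm (t *\<^sub>R (H *v v)) = t * norm (H *v v)" using t0 by simp
    also have "\<dots> \<le> t * (L * norm v)" using Hb t0 by (simp add: mult_left_mono)
    also have "\<dots> \<le> 1/8 * norm v"
    proof -
      have "(8 * L * t) * norm v \<le> 1 * norm v" using mult_right_mono[OF tL norm_ge_zero] .
      then show ?thesis by (simp add: algebra_simps)
    qed
    finally show ?thesis .
  qed
  have lo: "7/8 * norm v \<le> norm (A *v v)" for v
    using norm_triangle_ineq2[of v "- (t *\<^sub>R (H *v v))"] small[of v] by (simp add: Av)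
  have hi: "norm (A *v v) \<le> 9/8 * norm v" for v
    using norm_triangle_ineq[of v "t *\<^sub>R (H *v v)"] small[of v] by (simp add: Av)
  have "inj ((*v) A)"
  proof (rule injI)
    fix x y assume "A *v x = A *v y"
    then have "A *v (x - y) = 0" by (simp add: matrix_vector_mult_diff_distrib)
    then show "x = y" using lo[of "x - y"] by simp
  qed
  then have invA: "invertible A"
    using matrix_left_invertible_injective invertible_left_inverse by blast
  then show "invertible (mat 1 + t *\<^sub>R H)" by (simp add: A_def)
  define B where "B = matrix_inv A"
  have AB: "A ** B = mat 1 \<and> B ** A = mat 1"
    unfolding B_def matrix_inv_def using invA unfolding invertible_def by (rule someI_ex)
  then show "(mat 1 + t *\<^sub>R H) ** matrix_inv (mat 1 + t *\<^sub>R H) = mat 1"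
    "matrix_inv (mat 1 + t *\<^sub>R H) ** (mat 1 + t *\<^sub>R H) = mat 1" by (simp_all add: A_def B_def)
  have tA: "transpose A = A" by (simp add: A_def transpose_add' transpose_scalar sym)
  have "transpose B ** A = mat 1"
    using AB matrix_transpose_mul[of A B] tA by simp
  then have "transpose B = B"
    by (metis AB matrix_mul_assoc matrix_mul_lid matrix_mul_rid)
  then show "transpose (matrix_inv (mat 1 + t *\<^sub>R H)) = matrix_inv (mat 1 + t *\<^sub>R H)"
    by (simp add: A_def B_def)
  have vAB: "v = A *v (B *v v)" for v by (simp add: matrix_vector_mul_assoc AB)
  show "norm (matrix_inv (mat 1 + t *\<^sub>R H) *v v) \<le> 8/7 * norm v" for v
    using lo[of "B *v v"] vAB[of v] by (simp add: A_def B_def)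
  show "norm v \<le> 9/8 * norm (matrix_inv (mat 1 + t *\<^sub>R H) *v v)" for v
    using hi[of "B *v v"] vAB[of v] by (simp add: A_def B_def)
  show "pos_def (matrix_inv (mat 1 + t *\<^sub>R H))"
    unfolding pos_def_def
  proof (intro conjI allI impI)
    show "transpose (matrix_inv (mat 1 + t *\<^sub>R H)) = matrix_inv (mat 1 + t *\<^sub>R H)"
      using \<open>transpose B = B\<close> by (simp add: A_def B_def)
    fix v :: "real^'n" assume "v \<noteq> 0"
    define w where "w = B *v v"
    have "w \<noteq> 0" using vAB[of v] \<open>v \<noteq> 0\<close> by (auto simp: w_def)
    have "v \<bullet> w = (w + t *\<^sub>R (H *v w)) \<bullet> w" using vAB[of v] Av[of w] by (simp add: w_def)
    also have "\<dots> = w \<bullet> w + (t *\<^sub>R (H *v w)) \<bullet> w" by (simp add: inner_add_left)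
    also have "\<dots> \<ge> w \<bullet> w - norm (t *\<^sub>R (H *v w)) * norm w"
      using Cauchy_Schwarz_ineq2[of "t *\<^sub>R (H *v w)" w] by (smt (verit) abs_le_iff)
    finally have "v \<bullet> w \<ge> norm w ^ 2 - 1/8 * norm w * norm w"
      using small[of w] by (smt (verit) mult_right_mono norm_ge_zero power2_norm_eq_inner)
    moreover have "norm w > 0" using \<open>w \<noteq> 0\<close> by simp
    moreover have "norm w ^ 2 - 1/8 * norm w * norm w = 7/8 * norm w ^ 2" by (simp add: power2_eq_square)
    moreover have "norm w ^ 2 > 0" using \<open>norm w > 0\<close> by simp
    ultimately have "v \<bullet> w > 0" by linarith
    then show "v \<bullet> (matrix_inv (mat 1 + t *\<^sub>R H) *v v) > 0" by (simp add: w_def B_def A_def)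
  qed
qed

lemma mm_diff_left: "(A::real^'n^'n) ** (B - C) = A ** B - A ** C"
  by (simp add: matrix_matrix_mult_def vec_eq_iff sum_subtractf algebra_simps)
lemma mm_diff_right: "((B::real^'n^'n) - C) ** A = B ** A - C ** A"
  by (simp add: matrix_matrix_mult_def vec_eq_iff sum_subtractf algebra_simps)

lemma col_entry: "((D::real^'n^'m) *v axis k 1) $ i = D $ i $ k"
  by (simp add: matrix_vector_mult_basis column_def)

lemma diag_entry: "(M::real^'n^'n) $ k $ k = axis k 1 \<bullet> (M *v axis k 1)"
  by (simp add: inner_axis' col_entry)

lemma quad_trace:
  fixes D X :: "real^'n^'n"
  assumes "transpose D = D"
  shows "trace (D ** (X ** D)) = (\<Sum>k\<in>UNIV. (D *v axis k 1) \<bullet> (X *v (D *v axis k 1)))"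
proof -
  have "(D ** (X ** D)) $ k $ k = (D *v axis k 1) \<bullet> (X *v (D *v axis k 1))" for k
  proof -
    have "(D ** (X ** D)) $ k $ k = axis k 1 \<bullet> (D *v (X *v (D *v axis k 1)))"
      by (simp add: diag_entry matrix_vector_mul_assoc)
    also have "\<dots> = (axis k 1 v* D) \<bullet> (X *v (D *v axis k 1))" by (simp add: dot_lmul_matrix)
    also have "axis k 1 v* D = D *v axis k 1"
      using transpose_matrix_vector[of D "axis k 1"] assms by simp
    finally show ?thesis .
  qed
  then show ?thesis by (simp add: trace_def)
qed

lemma pd_unique:
  fixes S R :: "real^'n^'n"
  assumes S: "pos_def S" and R: "pos_def R" and eq: "S ** S = R ** R"
  shows "S = R"
proof -
  define D where "D = S - R"
  have tD: "transpose D = D" using S R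
    by (simp add: pos_def_def D_def transpose_def vec_eq_iff)
  have "S ** D + D ** R = S ** S - R ** R"
    by (simp add: D_def mm_diff_left mm_diff_right)
  then have "S ** D + D ** R = 0" using eq by simp
  then have "D ** (S ** D) + D ** (D ** R) = 0"
  proof -
    have "D ** (S ** D + D ** R) = D ** (S**D) + D ** (D**R)" by (rule matrix_add_ldistrib)
    moreover have "D ** (0::real^'n^'n) = 0" by (simp add: matrix_matrix_mult_def vec_eq_iff)
    ultimately show ?thesis using \<open>S ** D + D ** R = 0\<close> by simp
  qed
  then have "trace (D ** (S ** D)) + trace (D ** (D ** R)) = 0"
    by (metis trace_add trace_0 mat_0)
  moreover have "trace (D ** (D ** R)) = trace (D ** (R ** D))"
    by (metis matrix_mul_assoc trace_mul_sym)
  ultimately have sum0: "(\<Sum>k\<in>UNIV. (D *v axis k 1) \<bullet> (S *v (D *v axis k 1)))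
      + (\<Sum>k\<in>UNIV. (D *v axis k 1) \<bullet> (R *v (D *v axis k 1))) = 0"
    by (simp add: quad_trace[OF tD])
  have nn: "0 \<le> v \<bullet> (X *v v)" if "pos_def X" for X and v :: "real^'n"
    using that unfolding pos_def_def by (cases "v = 0") (auto intro: less_imp_le)
  have s1: "0 \<le> (\<Sum>k\<in>UNIV. (D *v axis k 1) \<bullet> (S *v (D *v axis k 1)))"
    by (rule sum_nonneg) (rule nn[OF S])
  have s2: "0 \<le> (\<Sum>k\<in>UNIV. (D *v axis k 1) \<bullet> (R *v (D *v axis k 1)))"
    by (rule sum_nonneg) (rule nn[OF R])
  have "(\<Sum>k\<in>UNIV. (D *v axis k 1) \<bullet> (S *v (D *v axis k 1))) = 0" using sum0 s1 s2 by linarith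
  then have "\<forall>k\<in>UNIV. (D *v axis k 1) \<bullet> (S *v (D *v axis k 1)) = 0"
    using sum_nonneg_eq_0_iff[of UNIV "\<lambda>k. (D *v axis k 1) \<bullet> (S *v (D *v axis k 1))"] nn[OF S] by simp
  then have "D *v axis k 1 = 0" for k
    using S unfolding pos_def_def by force
  then have "D = 0" by (simp add: vec_eq_iff col_entry[symmetric])
  then show ?thesis by (simp add: D_def)
qed

lemma pd_sqrt_eq:
  assumes "pos_def B" shows "pd_sqrt (B ** B) = B"
  unfolding pd_sqrt_def
  by (rule the_equality) (use assms pd_unique in auto)

lemma line_deriv:
  fixes g :: "real^'n \<Rightarrow> real"
  assumes "(g has_derivative D) (at (y + s0 *\<^sub>R e))"
  shows "((\<lambda>s. g (y + s *\<^sub>R e)) has_real_derivative D e) (at s0)"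
proof -
  have l: "((\<lambda>s. y + s *\<^sub>R e) has_derivative (\<lambda>h. h *\<^sub>R e)) (at s0)"
    by (auto intro!: derivative_eq_intros)
  have c: "((\<lambda>s. g (y + s *\<^sub>R e)) has_derivative (\<lambda>h. D (h *\<^sub>R e))) (at s0)"
    using has_derivative_compose[OF l assms] .
  have bl: "bounded_linear D" using assms by (rule has_derivative_bounded_linear)
  interpret D: bounded_linear D by (rule bl)
  have "(\<lambda>h. D (h *\<^sub>R e)) = (\<lambda>h. D e * h)"
    by (auto simp: D.scaleR mult.commute)
  then show ?thesis using c by (simp add: has_field_derivative_def)
qed

lemma partial_eq:
  fixes g :: "real^'n \<Rightarrow> real"
  assumes "(g has_derivative D) (at x)"
  shows "partial i g x = D (axis i 1)"
  unfolding partial_def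
  by (rule DERIV_imp_deriv) (rule line_deriv, use assms in simp)

lemma partial_line:
  fixes g :: "real^'n \<Rightarrow> real"
  assumes "g differentiable (at (y + s0 *\<^sub>R axis i 1))"
  shows "((\<lambda>s. g (y + s *\<^sub>R axis i 1)) has_real_derivative partial i g (y + s0 *\<^sub>R axis i 1)) (at s0)"
proof -
  obtain D where D: "(g has_derivative D) (at (y + s0 *\<^sub>R axis i 1))"
    using assms differentiable_def by blast
  show ?thesis using line_deriv[OF D] partial_eq[OF D] by simp
qed

lemma schwarz_half:
  fixes f :: "real^'n \<Rightarrow> real"
  assumes fd: "\<And>y. f differentiable (at y)" and gd: "partial i f differentiable (at x)"
    and ep: "\<epsilon> > 0"
  shows "\<exists>\<delta>>0. \<forall>h. 0 < h \<and> h < \<delta> \<longrightarrow>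
    \<bar>(f (x + h *\<^sub>R axis j 1 + h *\<^sub>R axis i 1) - f (x + h *\<^sub>R axis i 1) - f (x + h *\<^sub>R axis j 1) + f x)
      - h^2 * partial j (partial i f) x\<bar> \<le> 3 * \<epsilon> * h^2"
proof -
  define g where "g = partial i f"
  define e :: "real^'n" where "e = axis i 1"
  define d :: "real^'n" where "d = axis j 1"
  obtain Dg where Dg: "(g has_derivative Dg) (at x)" using gd differentiable_def g_def by blast
  have bl: "bounded_linear Dg" using Dg by (rule has_derivative_bounded_linear)
  interpret Dg: bounded_linear Dg by (rule bl)
  have P: "partial j g x = Dg d" using partial_eq[OF Dg] d_def by simp
  obtain \<delta> where \<delta>: "\<delta> > 0" and dl: "\<And>y. norm (y - x) < \<delta> \<Longrightarrow> \<bar>g y - g x - Dg (y - x)\<bar> \<le> \<epsilon> * norm (y - x)"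
    using Dg ep unfolding has_derivative_at_alt by (metis real_norm_def)
  show ?thesis
  proof (intro exI[of _ "\<delta>/2"] conjI allI impI)
    show "\<delta>/2 > 0" using \<delta> by simp
    fix h :: real assume h: "0 < h \<and> h < \<delta>/2"
    define \<phi> where "\<phi> s = f ((x + h *\<^sub>R d) + s *\<^sub>R e) - f (x + s *\<^sub>R e)" for s
    have der: "DERIV \<phi> s :> g ((x + h *\<^sub>R d) + s *\<^sub>R e) - g (x + s *\<^sub>R e)" for s
      unfolding \<phi>_def g_def e_def
      by (intro DERIV_diff partial_line fd)
    obtain \<xi> where \<xi>: "0 < \<xi>" "\<xi> < h"
      and mvt: "\<phi> h - \<phi> 0 = (h - 0) * (g ((x + h *\<^sub>R d) + \<xi> *\<^sub>R e) - g (x + \<xi> *\<^sub>R e))"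
      using MVT2[of 0 h \<phi> "\<lambda>s. g ((x + h *\<^sub>R d) + s *\<^sub>R e) - g (x + s *\<^sub>R e)"] der h by blast
    have ne: "norm e = 1" "norm d = 1" by (simp_all add: e_def d_def)
    have n1: "norm (h *\<^sub>R d + \<xi> *\<^sub>R e) \<le> h + \<xi>"
      using norm_triangle_ineq[of "h *\<^sub>R d" "\<xi> *\<^sub>R e"] ne h \<xi> by simp
    have n2: "norm (\<xi> *\<^sub>R e) = \<xi>" using ne \<xi> by simp
    have e1: "\<bar>g ((x + h *\<^sub>R d) + \<xi> *\<^sub>R e) - g x - Dg (h *\<^sub>R d + \<xi> *\<^sub>R e)\<bar> \<le> \<epsilon> * (h + \<xi>)"
    proof -
      have "\<bar>g ((x + h *\<^sub>R d) + \<xi> *\<^sub>R e) - g x - Dg (h *\<^sub>R d + \<xi> *\<^sub>R e)\<bar> \<le> \<epsilon> * norm (h *\<^sub>R d + \<xi> *\<^sub>R e)"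
        using dl[of "(x + h *\<^sub>R d) + \<xi> *\<^sub>R e"] n1 h \<xi> by (simp add: algebra_simps)
      also have "\<dots> \<le> \<epsilon> * (h + \<xi>)" using n1 ep by (simp add: mult_left_mono)
      finally show ?thesis .
    qed
    have e2: "\<bar>g (x + \<xi> *\<^sub>R e) - g x - Dg (\<xi> *\<^sub>R e)\<bar> \<le> \<epsilon> * \<xi>"
      using dl[of "x + \<xi> *\<^sub>R e"] n2 h \<xi> by simp
    have lin: "Dg (h *\<^sub>R d + \<xi> *\<^sub>R e) - Dg (\<xi> *\<^sub>R e) = h * Dg d"
      by (simp add: Dg.add Dg.scaleR)
    have diffb: "\<bar>(g ((x + h *\<^sub>R d) + \<xi> *\<^sub>R e) - g (x + \<xi> *\<^sub>R e)) - h * Dg d\<bar> \<le> 3 * \<epsilon> * h"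
    proof -
      have "\<epsilon> * \<xi> \<le> \<epsilon> * h" using \<xi> ep by (simp add: mult_left_mono)
      then have "\<epsilon> * (h + \<xi>) + \<epsilon> * \<xi> \<le> 3 * \<epsilon> * h" by (simp add: distrib_left)
      then show ?thesis using e1 e2 lin by arith
    qed
    have "\<phi> h - \<phi> 0 = f (x + h *\<^sub>R d + h *\<^sub>R e) - f (x + h *\<^sub>R e) - f (x + h *\<^sub>R d) + f x"
      by (simp add: \<phi>_def)
    then have "(f (x + h *\<^sub>R d + h *\<^sub>R e) - f (x + h *\<^sub>R e) - f (x + h *\<^sub>R d) + f x) - h^2 * Dg d
        = h * ((g ((x + h *\<^sub>R d) + \<xi> *\<^sub>R e) - g (x + \<xi> *\<^sub>R e)) - h * Dg d)"
      using mvt by (simp add: power2_eq_square right_diff_distrib)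
    then have "\<bar>(f (x + h *\<^sub>R d + h *\<^sub>R e) - f (x + h *\<^sub>R e) - f (x + h *\<^sub>R d) + f x) - h^2 * Dg d\<bar>
        = h * \<bar>(g ((x + h *\<^sub>R d) + \<xi> *\<^sub>R e) - g (x + \<xi> *\<^sub>R e)) - h * Dg d\<bar>"
      using h by (simp add: abs_mult)
    also have "\<dots> \<le> h * (3 * \<epsilon> * h)" using diffb h by (simp add: mult_left_mono)
    finally show "\<bar>(f (x + h *\<^sub>R axis j 1 + h *\<^sub>R axis i 1) - f (x + h *\<^sub>R axis i 1) - f (x + h *\<^sub>R axis j 1) + f x)
      - h^2 * partial j (partial i f) x\<bar> \<le> 3 * \<epsilon> * h^2"
      using P by (simp add: e_def d_def g_def power2_eq_square mult.commute mult.left_commute)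
  qed
qed

lemma schwarz:
  fixes f :: "real^'n \<Rightarrow> real"
  assumes fd: "\<And>y. f differentiable (at y)"
    and gi: "\<And>y. partial i f differentiable (at y)" and gj: "\<And>y. partial j f differentiable (at y)"
  shows "partial j (partial i f) x = partial i (partial j f) x"
proof -
  define P where "P = partial j (partial i f) x"
  define Q where "Q = partial i (partial j f) x"
  have "\<bar>P - Q\<bar> \<le> 6 * \<epsilon>" if ep: "\<epsilon> > 0" for \<epsilon>
  proof -
    obtain d1 where d1: "d1 > 0" "\<And>h. 0 < h \<and> h < d1 \<Longrightarrow>
      \<bar>(f (x + h *\<^sub>R axis j 1 + h *\<^sub>R axis i 1) - f (x + h *\<^sub>R axis i 1) - f (x + h *\<^sub>R axis j 1) + f x)
      - h^2 * P\<bar> \<le> 3 * \<epsilon> * h^2"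
      using schwarz_half[OF fd gi ep, of x j] unfolding P_def by blast
    obtain d2 where d2: "d2 > 0" "\<And>h. 0 < h \<and> h < d2 \<Longrightarrow>
      \<bar>(f (x + h *\<^sub>R axis i 1 + h *\<^sub>R axis j 1) - f (x + h *\<^sub>R axis j 1) - f (x + h *\<^sub>R axis i 1) + f x)
      - h^2 * Q\<bar> \<le> 3 * \<epsilon> * h^2"
      using schwarz_half[OF fd gj ep, of x i] unfolding Q_def by blast
    define h where "h = min d1 d2 / 2"
    have h: "0 < h" "h < d1" "h < d2" using d1 d2 by (auto simp: h_def)
    have sw: "x + h *\<^sub>R axis i 1 + h *\<^sub>R axis j 1 = x + h *\<^sub>R axis j 1 + h *\<^sub>R axis i 1"
      by (simp add: algebra_simps)
    have "\<bar>h^2 * P - h^2 * Q\<bar> \<le> 6 * \<epsilon> * h^2"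
      using d1(2)[of h] d2(2)[of h] h sw by simp
    moreover have "\<bar>h^2 * P - h^2 * Q\<bar> = h^2 * \<bar>P - Q\<bar>"
      by (simp add: abs_mult right_diff_distrib[symmetric])
    ultimately have "h^2 * \<bar>P - Q\<bar> \<le> 6 * \<epsilon> * h^2" by simp
    then show ?thesis using h by (simp add: mult.commute)
  qed
  note hyp = this
  have "\<bar>P - Q\<bar> \<le> 0"
  proof (rule ccontr)
    assume "\<not> \<bar>P - Q\<bar> \<le> 0"
    then have "\<bar>P - Q\<bar> \<le> 6 * (\<bar>P - Q\<bar> / 12)" using hyp[of "\<bar>P - Q\<bar> / 12"] by simp
    then show False using \<open>\<not> \<bar>P - Q\<bar> \<le> 0\<close> by simp
  qed
  then show ?thesis by (simp add: P_def Q_def)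
qed

lemma sc_mm_left: "(c *\<^sub>R X) ** (Y::real^'n^'n) = c *\<^sub>R (X ** Y)"
  by (simp add: matrix_matrix_mult_def vec_eq_iff sum_distrib_left mult.assoc)
lemma sc_mm_right: "(X::real^'n^'n) ** (c *\<^sub>R Y) = c *\<^sub>R (X ** Y)"
  by (simp add: matrix_matrix_mult_def vec_eq_iff sum_distrib_left mult.left_commute)
lemma neg_mm_left: "(- X) ** (Y::real^'n^'n) = - (X ** Y)"
  by (simp add: matrix_matrix_mult_def vec_eq_iff sum_negf)
lemma neg_mm_right: "(X::real^'n^'n) ** (- Y) = - (X ** Y)"
  by (simp add: matrix_matrix_mult_def vec_eq_iff sum_negf)

lemma mm_tendsto:
  fixes X Y :: "'a \<Rightarrow> real^'n^'n"
  assumes "(X \<longlongrightarrow> a) F" "(Y \<longlongrightarrow> b) F"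
  shows "((\<lambda>s. X s ** Y s) \<longlongrightarrow> a ** b) F"
  apply (rule vec_tendstoI)
  apply (rule vec_tendstoI)
  unfolding matrix_matrix_mult_def
  apply simp
  apply (intro tendsto_intros assms)
  done

lemma mv_tendsto:
  fixes X :: "'a \<Rightarrow> real^'n^'n"
  assumes "(X \<longlongrightarrow> a) F"
  shows "((\<lambda>s. X s *v v) \<longlongrightarrow> a *v v) F"
  apply (rule vec_tendstoI)
  unfolding matrix_vector_mult_def
  apply simp
  apply (intro tendsto_intros assms)
  done

lemma eventually_nz: "eventually (\<lambda>s::real. s \<noteq> 0) (at 0)"
  by (simp add: eventually_at_filter)

lemma hess_quot:
  fixes f :: "real^'n \<Rightarrow> real"
  assumes th: "thrice_differentiable f"
  shows "((\<lambda>s. (1/s) *\<^sub>R (hess f (x + s *\<^sub>R axis i 1) - hess f x)) \<longlongrightarrow> third f x i) (at 0)"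
proof (rule vec_tendstoI, rule vec_tendstoI)
  fix j k
  have "(\<lambda>y. hess f y $ j $ k) = partial j (partial k f)" by (simp add: hess_def fun_eq_iff)
  then have hd: "(\<lambda>y. hess f y $ j $ k) differentiable (at z)" for z
    using th unfolding thrice_differentiable_def by simp
  have "((\<lambda>s. hess f (x + s *\<^sub>R axis i 1) $ j $ k) has_real_derivative third f x i $ j $ k) (at 0)"
    using partial_line[of "\<lambda>y. hess f y $ j $ k" x 0 i] hd by (simp add: third_def)
  then have "((\<lambda>s. (hess f (x + s *\<^sub>R axis i 1) $ j $ k - hess f x $ j $ k) / s) \<longlongrightarrow> third f x i $ j $ k) (at 0)"
    by (simp add: has_field_derivative_iff)
  then show "((\<lambda>s. ((1/s) *\<^sub>R (hess f (x + s *\<^sub>R axis i 1) - hess f x)) $ j $ k) \<longlongrightarrow> third f x i $ j $ k) (at 0)"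
    by simp
qed

lemma third_bound:
  fixes f :: "real^'n \<Rightarrow> real"
  assumes sm: "LM_smooth f L M"
  shows "norm (third f x i *v v) \<le> M * norm v"
proof -
  have th: "thrice_differentiable f" using sm by (simp add: LM_smooth_def)
  let ?Q = "\<lambda>s. (1/s) *\<^sub>R (hess f (x + s *\<^sub>R axis i 1) - hess f x)"
  have lim: "((\<lambda>s. ?Q s *v v) \<longlongrightarrow> third f x i *v v) (at 0)"
    by (rule mv_tendsto[OF hess_quot[OF th]])
  have "eventually (\<lambda>s. norm (?Q s *v v) \<le> M * norm v) (at 0)"
  proof (rule eventually_mono[OF eventually_nz])
    fix s :: real assume "s \<noteq> 0"
    have "onorm (\<lambda>v. (hess f (x + s *\<^sub>R axis i 1) - hess f x) *v v) \<le> M * norm (x + s *\<^sub>R axis i 1 - x)"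
      using sm unfolding LM_smooth_def by blast
    then have Lip: "norm ((hess f (x + s *\<^sub>R axis i 1) - hess f x) *v v) \<le> (M * \<bar>s\<bar>) * norm v"
      using mv_bound_from_onorm by fastforce
    have "?Q s *v v = (1/s) *\<^sub>R ((hess f (x + s *\<^sub>R axis i 1) - hess f x) *v v)"
      by (simp add: scaleR_matrix_vector_assoc)
    then have "norm (?Q s *v v) = (1/\<bar>s\<bar>) * norm ((hess f (x + s *\<^sub>R axis i 1) - hess f x) *v v)"
      by simp
    also have "\<dots> \<le> (1/\<bar>s\<bar>) * ((M * \<bar>s\<bar>) * norm v)" by (rule mult_left_mono[OF Lip]) simp
    also have "\<dots> = M * norm v" using \<open>s \<noteq> 0\<close> by simp
    finally show "norm (?Q s *v v) \<le> M * norm v" .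
  qed
  then show ?thesis
    using tendsto_upperbound[OF tendsto_norm[OF lim]] by simp
qed

locale setting =
  fixes f :: "real^'n \<Rightarrow> real" and L M t :: real
  assumes sm: "LM_smooth f L M" and t0: "0 \<le> t" and tL: "8 * L * t \<le> 1"
begin

abbreviation "Am y \<equiv> mat 1 + t *\<^sub>R hess f y"
abbreviation "Bm y \<equiv> matrix_inv (Am y)"

lemma th: "thrice_differentiable f" using sm by (simp add: LM_smooth_def)

lemma Hsym: "transpose (hess f y) = hess f y"
proof -
  have fd: "\<And>z. f differentiable (at z)" and pd: "\<And>j z. partial j f differentiable (at z)"
    using th unfolding thrice_differentiable_def by auto
  show ?thesis
    by (simp add: transpose_def hess_def vec_eq_iff schwarz[OF fd pd pd])
qed

lemma Hb: "norm (hess f y *v v) \<le> L * norm v"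
  using sm unfolding LM_smooth_def by (intro mv_bound_from_onorm) blast

lemma L0: "0 \<le> L"
proof -
  have "onorm (\<lambda>v. hess f 0 *v v) \<le> L" using sm unfolding LM_smooth_def by blast
  moreover have "0 \<le> onorm (\<lambda>v. hess f 0 *v v)" by (rule onorm_pos_le) simp
  ultimately show ?thesis by simp
qed

lemma M0: "0 \<le> M"
proof -
  obtain i :: 'n where True by simp
  have "onorm (\<lambda>v. (hess f (axis i 1) - hess f 0) *v v) \<le> M * norm (axis i 1 - 0 :: real^'n)"
    using sm unfolding LM_smooth_def by blast
  moreover have "0 \<le> onorm (\<lambda>v. (hess f (axis i 1) - hess f 0) *v v)" by (rule onorm_pos_le) simp
  ultimately show ?thesis by simp
qed

lemmas IP = inv_props[OF Hsym Hb t0 tL]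

lemma AB: "Am y ** Bm y = mat 1" using IP(2) .
lemma BA: "Bm y ** Am y = mat 1" using IP(3) .
lemma Bsym: "transpose (Bm y) = Bm y" using IP(4) .
lemma Bb: "norm (Bm y *v v) \<le> 8/7 * norm v" using IP(5) .
lemma Bb2: "norm v \<le> 9/8 * norm (Bm y *v v)" using IP(6) .
lemma Bpd: "pos_def (Bm y)" using IP(7) .

lemma G_eq: "Gmat f t y = Bm y ** Bm y" by (simp add: Gmat_def)

lemma quadG: "v \<bullet> (Gmat f t y *v v) = norm (Bm y *v v) ^ 2"
proof -
  have 1: "Gmat f t y *v v = Bm y *v (Bm y *v v)" by (simp only: G_eq matrix_vector_mul_assoc)
  have 2: "v v* Bm y = Bm y *v v" by (rule sym, rule transpose_matrix_vector[of "Bm y" v, unfolded Bsym])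
  have "v \<bullet> (Gmat f t y *v v) = (v v* Bm y) \<bullet> (Bm y *v v)" unfolding 1 by (rule dot_lmul_matrix[symmetric])
  also have "\<dots> = norm (Bm y *v v) ^ 2" unfolding 2 by (rule power2_norm_eq_inner[symmetric])
  finally show ?thesis .
qed

lemma quad_scal: "(v::real^'n) \<bullet> ((c *\<^sub>R mat 1) *v v) = c * norm v ^ 2"
proof -
  have "(c *\<^sub>R mat 1) *v v = c *\<^sub>R (mat 1 *v v)"
    by (simp add: matrix_vector_mult_def vec_eq_iff sum_distrib_left mult.assoc real_scaleR_def scaleR_sum_right)
  then show ?thesis by (simp add: power2_norm_eq_inner)
qed

lemma loew1: "loewner_le ((3/4) *\<^sub>R mat 1) (Gmat f t y)"
  unfolding loewner_le_def
proof
  fix v :: "real^'n"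
  have a: "norm v \<le> 9/8 * norm (Bm y *v v)" by (rule Bb2)
  have "norm v * norm v \<le> (9/8 * norm (Bm y *v v)) * (9/8 * norm (Bm y *v v))"
    by (rule mult_mono[OF a a]) auto
  moreover have "0 \<le> norm (Bm y *v v) * norm (Bm y *v v)" by simp
  moreover have "(9/8 * norm (Bm y *v v)) * (9/8 * norm (Bm y *v v)) = 81/64 * (norm (Bm y *v v) * norm (Bm y *v v))"
    by (simp add: algebra_simps)
  ultimately have "3/4 * (norm v * norm v) \<le> norm (Bm y *v v) * norm (Bm y *v v)"
    by linarith
  then show "v \<bullet> ((3/4) *\<^sub>R mat 1 *v v) \<le> v \<bullet> (Gmat f t y *v v)"
    by (simp add: quad_scal quadG power2_eq_square)
qed

lemma loew2: "loewner_le (Gmat f t y) ((4/3) *\<^sub>R mat 1)"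
  unfolding loewner_le_def
proof
  fix v :: "real^'n"
  have a: "norm (Bm y *v v) \<le> 8/7 * norm v" by (rule Bb)
  have "norm (Bm y *v v) * norm (Bm y *v v) \<le> (8/7 * norm v) * (8/7 * norm v)"
    by (rule mult_mono[OF a a]) auto
  moreover have "0 \<le> norm v * norm v" by simp
  moreover have "(8/7 * norm v) * (8/7 * norm v) = 64/49 * (norm v * norm v)"
    by (simp add: algebra_simps)
  ultimately have "norm (Bm y *v v) * norm (Bm y *v v) \<le> 4/3 * (norm v * norm v)"
    by linarith
  then show "v \<bullet> (Gmat f t y *v v) \<le> v \<bullet> ((4/3) *\<^sub>R mat 1 *v v)"
    by (simp add: quad_scal quadG power2_eq_square)
qed


lemma hess_cont: "((\<lambda>s. hess f (x + s *\<^sub>R axis k 1)) \<longlongrightarrow> hess f x) (at 0)"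
proof -
  have "((\<lambda>s. hess f x + s *\<^sub>R ((1/s) *\<^sub>R (hess f (x + s *\<^sub>R axis k 1) - hess f x))) \<longlongrightarrow> hess f x + (0::real) *\<^sub>R third f x k) (at 0)"
    by (intro tendsto_intros tendsto_ident_at hess_quot[OF th])
  then have "((\<lambda>s. hess f x + s *\<^sub>R ((1/s) *\<^sub>R (hess f (x + s *\<^sub>R axis k 1) - hess f x))) \<longlongrightarrow> hess f x) (at 0)" by simp
  moreover have "eventually (\<lambda>s. hess f x + s *\<^sub>R ((1/s) *\<^sub>R (hess f (x + s *\<^sub>R axis k 1) - hess f x)) = hess f (x + s *\<^sub>R axis k 1)) (at 0)"
    by (rule eventually_mono[OF eventually_nz]) simp
  ultimately show ?thesis by (rule Lim_transform_eventually)
qed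

lemma Bdiff: "Bm z - Bm x = Bm z ** ((Am x - Am z) ** Bm x)"
proof -
  have "Bm z ** ((Am x - Am z) ** Bm x) = Bm z ** (Am x ** Bm x - Am z ** Bm x)"
    by (simp only: mm_diff_right)
  also have "\<dots> = Bm z - (Bm z ** Am z) ** Bm x"
    by (simp add: AB mm_diff_left matrix_mul_assoc)
  also have "\<dots> = Bm z - Bm x" by (simp add: BA)
  finally show ?thesis by simp
qed

lemma B_cont: "((\<lambda>s. Bm (x + s *\<^sub>R axis k 1)) \<longlongrightarrow> Bm x) (at 0)"
proof -
  let ?A = "\<lambda>s. Am (x + s *\<^sub>R axis k 1)"
  let ?B = "\<lambda>s. Bm (x + s *\<^sub>R axis k 1)"
  have Ac: "(?A \<longlongrightarrow> Am x) (at 0)" by (intro tendsto_intros hess_cont)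
  have eb: "\<bar>(?B s - Bm x) $ p $ q\<bar> \<le> 64/49 * (\<Sum>a\<in>UNIV. \<Sum>b\<in>UNIV. \<bar>(Am x - ?A s) $ a $ b\<bar>)" for s p q
  proof -
    let ?w = "Bm x *v axis q 1"
    have nw: "norm ?w \<le> 8/7" using Bb[of x "axis q 1"] by simp
    have "\<bar>(?B s - Bm x) $ p $ q\<bar> \<le> norm ((?B s - Bm x) *v axis q 1)"
      by (metis col_entry component_le_norm_cart)
    also have "(?B s - Bm x) *v axis q 1 = ?B s *v ((Am x - ?A s) *v ?w)"
      by (simp only: Bdiff matrix_vector_mul_assoc)
    also have "norm \<dots> \<le> 8/7 * norm ((Am x - ?A s) *v ?w)" by (rule Bb)
    also have "\<dots> \<le> 8/7 * (onorm ((*v) (Am x - ?A s)) * norm ?w)"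
      by (intro mult_left_mono onorm) auto
    also have "\<dots> \<le> 8/7 * ((\<Sum>a\<in>UNIV. \<Sum>b\<in>UNIV. \<bar>(Am x - ?A s) $ a $ b\<bar>) * (8/7))"
      by (intro mult_left_mono mult_mono onorm_le_matrix_component_sum nw) (auto intro: sum_nonneg)
    finally show ?thesis by simp
  qed
  have g0: "((\<lambda>s. 64/49 * (\<Sum>a\<in>UNIV. \<Sum>b\<in>UNIV. \<bar>(Am x - ?A s) $ a $ b\<bar>)) \<longlongrightarrow> 64/49 * (\<Sum>a\<in>UNIV. \<Sum>b\<in>UNIV. \<bar>(Am x - Am x) $ a $ b\<bar>)) (at 0)"
    by (intro tendsto_intros Ac)
  then have g0': "((\<lambda>s. 64/49 * (\<Sum>a\<in>UNIV. \<Sum>b\<in>UNIV. \<bar>(Am x - ?A s) $ a $ b\<bar>)) \<longlongrightarrow> 0) (at 0)"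
    by simp
  have "((\<lambda>s. ?B s - Bm x) \<longlongrightarrow> 0) (at 0)"
  proof (rule vec_tendstoI, rule vec_tendstoI)
    fix p q
    have "((\<lambda>s. (?B s - Bm x) $ p $ q) \<longlongrightarrow> 0) (at 0)"
      by (rule Lim_null_comparison[OF always_eventually g0']) (use eb in auto)
    then show "((\<lambda>s. (?B s - Bm x) $ p $ q) \<longlongrightarrow> 0 $ p $ q) (at 0)" by simp
  qed
  then show ?thesis by (rule LIM_zero_cancel)
qed

abbreviation "Cm x k \<equiv> - ((Bm x ** ((t *\<^sub>R third f x k) ** Bm x)) ** Bm x + Bm x ** (Bm x ** ((t *\<^sub>R third f x k) ** Bm x)))"

lemma G_partial: "partial k (\<lambda>y. Gmat f t y $ a $ b) x = Cm x k $ a $ b"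
proof -
  let ?A = "\<lambda>s. Am (x + s *\<^sub>R axis k 1)"
  let ?B = "\<lambda>s. Bm (x + s *\<^sub>R axis k 1)"
  let ?Q = "\<lambda>s. (1/s) *\<^sub>R (?A s - Am x)"
  let ?G = "\<lambda>s. Gmat f t (x + s *\<^sub>R axis k 1)"
  have Qeq: "?Q = (\<lambda>s. t *\<^sub>R ((1/s) *\<^sub>R (hess f (x + s *\<^sub>R axis k 1) - hess f x)))"
    by (rule ext) (simp add: algebra_simps)
  have Qlim: "(?Q \<longlongrightarrow> t *\<^sub>R third f x k) (at 0)"
    unfolding Qeq by (intro tendsto_intros hess_quot[OF th])
  have key: "(1/s) *\<^sub>R (?G s - Gmat f t x) = - ((?B s ** (?Q s ** Bm x)) ** ?B s + Bm x ** (?B s ** (?Q s ** Bm x)))"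
    for s
  proof -
    have E1: "?B s - Bm x = - (?B s ** ((?A s - Am x) ** Bm x))"
    proof -
      have "Am x - ?A s = - (?A s - Am x)" by simp
      then show ?thesis using Bdiff[of "x + s *\<^sub>R axis k 1"] by (simp only: neg_mm_left neg_mm_right)
    qed
    have E2: "?G s - Gmat f t x = (?B s - Bm x) ** ?B s + Bm x ** (?B s - Bm x)"
      by (simp add: G_eq mm_diff_left mm_diff_right)
    have "?G s - Gmat f t x = - ((?B s ** ((?A s - Am x) ** Bm x)) ** ?B s + Bm x ** (?B s ** ((?A s - Am x) ** Bm x)))"
      unfolding E2 E1 by (simp only: neg_mm_left neg_mm_right minus_add_distrib)
    then show ?thesis by (simp only: sc_mm_left sc_mm_right scaleR_add_right scaleR_minus_right)
  qed
  have lim1: "((\<lambda>s. - ((?B s ** (?Q s ** Bm x)) ** ?B s + Bm x ** (?B s ** (?Q s ** Bm x)))) \<longlongrightarrow> Cm x k) (at 0)"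
    by (intro tendsto_minus tendsto_add mm_tendsto B_cont Qlim tendsto_const)
  have lim2: "((\<lambda>s. (1/s) *\<^sub>R (?G s - Gmat f t x)) \<longlongrightarrow> Cm x k) (at 0)"
    using lim1 key by simp
  have "((\<lambda>s. ((1/s) *\<^sub>R (?G s - Gmat f t x)) $ a $ b) \<longlongrightarrow> Cm x k $ a $ b) (at 0)"
    by (intro tendsto_vec_nth lim2)
  then have "((\<lambda>s. (?G s $ a $ b - Gmat f t x $ a $ b) / (s - 0)) \<longlongrightarrow> Cm x k $ a $ b) (at 0)"
    by simp
  then have "((\<lambda>s. ?G s $ a $ b) has_real_derivative Cm x k $ a $ b) (at 0)"
    by (simp add: has_field_derivative_iff)
  then show ?thesis unfolding partial_def by (rule DERIV_imp_deriv)
qed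

lemma neg_mv: "(- X) *v (w::real^'n) = - ((X::real^'n^'n) *v w)"
  by (simp add: matrix_vector_mult_def vec_eq_iff sum_negf)

lemma tT_bound: "norm ((t *\<^sub>R third f x k) *v u) \<le> t * M * norm u"
proof -
  have "(t *\<^sub>R third f x k) *v u = t *\<^sub>R (third f x k *v u)"
    by (simp add: scaleR_matrix_vector_assoc)
  then have "norm ((t *\<^sub>R third f x k) *v u) = t * norm (third f x k *v u)" using t0 by simp
  also have "\<dots> \<le> t * (M * norm u)" by (rule mult_left_mono[OF third_bound[OF sm] t0])
  finally show ?thesis by (simp add: mult.assoc)
qed

lemma Cm_bound: "norm (Cm x k *v w) \<le> 2 * (8/7)^3 * (t * M) * norm w"
proof -
  let ?T = "t *\<^sub>R third f x k"
  have eq: "Cm x k *v w = - (Bm x *v (?T *v (Bm x *v (Bm x *v w))) + Bm x *v (Bm x *v (?T *v (Bm x *v w))))"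
    by (simp only: neg_mv matrix_vector_mult_add_rdistrib matrix_vector_mul_assoc[symmetric])
  have tri: "norm (Cm x k *v w) \<le> norm (Bm x *v (?T *v (Bm x *v (Bm x *v w)))) + norm (Bm x *v (Bm x *v (?T *v (Bm x *v w))))"
    unfolding eq norm_minus_cancel by (rule norm_triangle_ineq)
  have b1: "norm (Bm x *v (?T *v (Bm x *v (Bm x *v w)))) \<le> (8/7)^3 * (t * M) * norm w"
  proof -
    have "norm (Bm x *v (?T *v (Bm x *v (Bm x *v w)))) \<le> 8/7 * norm (?T *v (Bm x *v (Bm x *v w)))" by (rule Bb)
    also have "\<dots> \<le> 8/7 * (t * M * norm (Bm x *v (Bm x *v w)))" by (intro mult_left_mono tT_bound) simp
    also have "\<dots> \<le> 8/7 * (t * M * (8/7 * norm (Bm x *v w)))"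
      using t0 M0 by (intro mult_left_mono Bb) simp_all
    also have "\<dots> \<le> 8/7 * (t * M * (8/7 * (8/7 * norm w)))"
      using t0 M0 by (intro mult_left_mono Bb) simp_all
    finally show ?thesis by (simp add: power3_eq_cube algebra_simps)
  qed
  have b2: "norm (Bm x *v (Bm x *v (?T *v (Bm x *v w)))) \<le> (8/7)^3 * (t * M) * norm w"
  proof -
    have "norm (Bm x *v (Bm x *v (?T *v (Bm x *v w)))) \<le> 8/7 * norm (Bm x *v (?T *v (Bm x *v w)))" by (rule Bb)
    also have "\<dots> \<le> 8/7 * (8/7 * norm (?T *v (Bm x *v w)))" by (intro mult_left_mono Bb) simp
    also have "\<dots> \<le> 8/7 * (8/7 * (t * M * norm (Bm x *v w)))" by (intro mult_left_mono tT_bound) simp_all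
    also have "\<dots> \<le> 8/7 * (8/7 * (t * M * (8/7 * norm w)))"
      using t0 M0 by (intro mult_left_mono Bb) simp_all
    finally show ?thesis by (simp add: power3_eq_cube algebra_simps)
  qed
  have "norm (Cm x k *v w) \<le> (8/7)^3 * (t * M) * norm w + (8/7)^3 * (t * M) * norm w"
    using tri add_mono[OF b1 b2] by (rule order_trans)
  also have "\<dots> = 2 * (8/7)^3 * (t * M) * norm w" by (simp only: mult_2[symmetric] mult.assoc)
  finally show ?thesis .
qed

lemma mdiv_eq: "mdiv (Gmat f t) x = (\<Sum>k\<in>UNIV. Cm x k *v axis k 1)"
proof -
  have "mdiv (Gmat f t) x $ i = (\<Sum>k\<in>UNIV. Cm x k *v axis k 1) $ i" for i
  proof -
    have "mdiv (Gmat f t) x $ i = (\<Sum>j\<in>UNIV. Cm x j $ i $ j)"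
      by (simp only: mdiv_def vec_lambda_beta G_partial)
    also have "\<dots> = (\<Sum>k\<in>UNIV. (Cm x k *v axis k 1) $ i)" by (simp only: col_entry)
    also have "\<dots> = (\<Sum>k\<in>UNIV. Cm x k *v axis k 1) $ i" by (rule sum_component[symmetric])
    finally show ?thesis .
  qed
  then show ?thesis unfolding vec_eq_iff by blast
qed

lemma mdiv_bound: "norm (mdiv (Gmat f t) x) \<le> real CARD('n) * (2 * (8/7)^3 * (t * M))"
proof -
  have "norm (mdiv (Gmat f t) x) \<le> (\<Sum>k\<in>UNIV. norm (Cm x k *v axis k 1))"
    unfolding mdiv_eq by (rule norm_sum)
  also have "\<dots> \<le> (\<Sum>k\<in>(UNIV::'n set). 2 * (8/7)^3 * (t * M))"
    by (rule sum_mono) (rule order_trans[OF Cm_bound], simp)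
  finally show ?thesis by simp
qed


lemma comp_norm:
  fixes x :: "real^'n"
  assumes "\<And>i. \<bar>x $ i\<bar> \<le> c"
  shows "norm x \<le> sqrt (real CARD('n)) * c"
proof -
  obtain i0 :: 'n where True by simp
  have c0: "0 \<le> c" using assms[of i0] by linarith
  have "norm x = sqrt (\<Sum>i\<in>UNIV. (x $ i)^2)" by (simp add: norm_vec_def L2_set_def)
  also have "\<dots> \<le> sqrt (\<Sum>i\<in>(UNIV::'n set). c^2)"
  proof (rule real_sqrt_le_mono, rule sum_mono)
    fix i show "(x $ i)^2 \<le> c^2" using power_mono[OF assms[of i] abs_ge_zero, of 2] by simp
  qed
  also have "\<dots> = sqrt (real CARD('n)) * c" using c0 by (simp add: real_sqrt_mult)
  finally show ?thesis .
qed

lemma Gv_bound: "norm (Gmat f t x *v v) \<le> 64/49 * norm v"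
proof -
  have "Gmat f t x *v v = Bm x *v (Bm x *v v)" by (simp only: G_eq matrix_vector_mul_assoc)
  then have "norm (Gmat f t x *v v) \<le> 8/7 * norm (Bm x *v v)" using Bb by simp
  also have "\<dots> \<le> 8/7 * (8/7 * norm v)" by (intro mult_left_mono Bb) simp
  finally show ?thesis by simp
qed

lemma tr3_comp: "\<bar>tr3 f x (Gmat f t x) $ i\<bar> \<le> real CARD('n) * (M * (64/49))"
proof -
  have ek: "\<bar>(third f x i ** Gmat f t x) $ k $ k\<bar> \<le> M * (64/49)" for k
  proof -
    have "\<bar>(third f x i ** Gmat f t x) $ k $ k\<bar> \<le> norm ((third f x i ** Gmat f t x) *v axis k 1)"
      by (metis col_entry component_le_norm_cart)
    also have "\<dots> = norm (third f x i *v (Gmat f t x *v axis k 1))"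
      by (simp only: matrix_vector_mul_assoc)
    also have "\<dots> \<le> M * norm (Gmat f t x *v axis k 1)" by (rule third_bound[OF sm])
    also have "\<dots> \<le> M * (64/49 * norm (axis k 1 :: real^'n))" by (intro mult_left_mono Gv_bound M0)
    finally show ?thesis by simp
  qed
  have "\<bar>tr3 f x (Gmat f t x) $ i\<bar> = \<bar>\<Sum>k\<in>UNIV. (third f x i ** Gmat f t x) $ k $ k\<bar>"
    by (simp add: tr3_def trace_def)
  also have "\<dots> \<le> (\<Sum>k\<in>UNIV. \<bar>(third f x i ** Gmat f t x) $ k $ k\<bar>)" by (rule sum_abs)
  also have "\<dots> \<le> (\<Sum>k\<in>(UNIV::'n set). M * (64/49))" by (rule sum_mono) (rule ek)
  finally show ?thesis by simp
qed

lemma mu_bound: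
  "norm (mu_tilde f t x) \<le> (4/3) * t * L * norm (grad f x) + 6 * t * real CARD('n) powr (3/2) * M"
proof -
  define n where "n = real CARD('n)"
  define s where "s = sqrt n"
  define a where "a = t *\<^sub>R (hess f x *v (Gmat f t x *v grad f x))"
  define b where "b = t *\<^sub>R (pd_sqrt (Gmat f t x) *v tr3 f x (Gmat f t x))"
  define c where "c = mdiv (Gmat f t) x"
  have n1: "1 \<le> n" by (simp add: n_def)
  have s1: "1 \<le> s" using n1 by (simp add: s_def)
  have pw: "real CARD('n) powr (3/2) = n * s"
  proof -
    have e: "(3/2::real) = 1 + 1/2" by simp
    have "real CARD('n) powr (3/2) = n powr (1 + 1/2)" by (simp only: e n_def)
    also have "\<dots> = n powr 1 * n powr (1/2)" by (rule powr_add)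
    also have "\<dots> = n * s" using n1 by (simp add: powr_half_sqrt s_def)
    finally show ?thesis .
  qed
  have "mu_tilde f t x = - a - b - c" by (simp add: mu_tilde_def a_def b_def c_def)
  moreover have "norm (- a - b - c) \<le> norm (- a - b) + norm c" by (rule norm_triangle_ineq4)
  moreover have "norm (- a - b) \<le> norm (- a) + norm b" by (rule norm_triangle_ineq4)
  ultimately have "norm (mu_tilde f t x) \<le> norm a + norm b + norm c" by simp
  moreover have "norm a \<le> (4/3) * t * L * norm (grad f x)"
  proof -
    have "norm a = t * norm (hess f x *v (Gmat f t x *v grad f x))" using t0 by (simp add: a_def)
    also have "\<dots> \<le> t * (L * norm (Gmat f t x *v grad f x))" by (intro mult_left_mono Hb t0)
    also have "\<dots> \<le> t * (L * (64/49 * norm (grad f x)))" by (intro mult_left_mono Gv_bound L0 t0)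
    also have "\<dots> \<le> t * (L * (4/3 * norm (grad f x)))" by (intro mult_left_mono L0 t0) simp
    finally show ?thesis by (simp add: algebra_simps)
  qed
  moreover have "norm b \<le> (512/343) * (t * M * n * s)"
  proof -
    have ps: "pd_sqrt (Gmat f t x) = Bm x" using pd_sqrt_eq[OF Bpd] by (simp add: G_eq)
    have "norm b = t * norm (Bm x *v tr3 f x (Gmat f t x))" using t0 by (simp add: b_def ps)
    also have "\<dots> \<le> t * (8/7 * norm (tr3 f x (Gmat f t x)))" by (intro mult_left_mono Bb t0)
    also have "\<dots> \<le> t * (8/7 * (s * (n * (M * (64/49)))))"
      unfolding s_def n_def by (intro mult_left_mono comp_norm tr3_comp t0) simp
    finally show ?thesis by (simp add: algebra_simps)
  qed
  moreover have "norm c \<le> (1024/343) * (t * M * n * s)"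
  proof -
    have "norm c \<le> n * (2 * (8/7)^3 * (t * M))" unfolding c_def n_def by (rule mdiv_bound)
    also have "\<dots> = (1024/343) * (t * M * n)" by (simp add: power3_eq_cube algebra_simps)
    also have "\<dots> \<le> (1024/343) * (t * M * n * s)"
    proof -
      have "0 \<le> t * M * n" using t0 M0 n1 by simp
      then have "t * M * n * 1 \<le> t * M * n * s" by (rule mult_left_mono[OF s1])
      then have h2: "t * M * n \<le> t * M * n * s" by (simp only: mult_1_right)
      show ?thesis by (rule mult_left_mono[OF h2]) simp
    qed
    finally show ?thesis .
  qed
  moreover have "0 \<le> t * M * n * s" using t0 M0 n1 s1 by simp
  ultimately have "norm (mu_tilde f t x) \<le> (4/3) * t * L * norm (grad f x) + 6 * (t * M * n * s)"
    by linarith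
  moreover have "6 * t * real CARD('n) powr (3/2) * M = 6 * (t * M * n * s)"
    unfolding pw by (simp only: mult_ac)
  ultimately show ?thesis by linarith
qed

end

theorem lemma5:
  fixes f :: "real^'n \<Rightarrow> real" and L M t :: real
  assumes "LM_smooth f L M"
    and "0 \<le> t" and "8 * L * t \<le> 1" and "M * t \<le> 1"
  shows "\<forall>x. loewner_le ((3/4) *\<^sub>R mat 1) (Gmat f t x)
            \<and> loewner_le (Gmat f t x) ((4/3) *\<^sub>R mat 1)
            \<and> norm (mu_tilde f t x)
                \<le> (4/3) * t * L * norm (grad f x) + 6 * t * real CARD('n) powr (3/2) * M"
proof -
  interpret setting f L M t using assms by unfold_locales auto
  show ?thesis using loew1 loew2 mu_bound by blast
qed

end
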